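(* Let $X,Y,Z$ be topological spaces and $f:X\times Y\to Z$ a mapping. Let $\tau_f$ be the topology on $X\times Y$ generated by $f$ and the two projections $X\times Y\to X$, $X\times Y\to Y$ (the coarsest topology making these three maps continuous). Then the set $Q$ of all $(x,y)\in X\times Y$ at which $f$ is lower $X$-quasicontinuous is closed in $(X\times Y,\tau_f)$.
   Context: $f$ is lower $X$-quasicontinuous at $(a,b)$ if for each neighborhood $U$ of $a$ in $X$, each neighborhood $V$ of $b$ in $Y$, and each neighborhood $W$ of $f(a,b)$ in $Z$, there is an open set $O\subset X$ with $\emptyset\neq O\subset U$ and $f(\{x\}\times V)\cap W\neq\emptyset$ for every $x\in O$. *)

theory Defs
  imports "HOL-Analysis.Analysis"
begin

definition tau_f :: "'a topology \<Rightarrow> 'b topology \<Rightarrow> 'c topology \<Rightarrow> ('a \<times> 'b \<Rightarrow> 'c) \<Rightarrow> ('a \<times> 'b) topology" where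
  "tau_f X Y Z f = topology_generated_by
     ({{p \<in> topspace X \<times> topspace Y. fst p \<in> U} | U. openin X U}
      \<union> {{p \<in> topspace X \<times> topspace Y. snd p \<in> V} | V. openin Y V}
      \<union> {{p \<in> topspace X \<times> topspace Y. f p \<in> W} | W. openin Z W})"

definition lower_X_quasicontinuous_at ::
  "'a topology \<Rightarrow> 'b topology \<Rightarrow> 'c topology \<Rightarrow> ('a \<times> 'b \<Rightarrow> 'c) \<Rightarrow> 'a \<Rightarrow> 'b \<Rightarrow> bool" where
  "lower_X_quasicontinuous_at X Y Z f a b \<longleftrightarrow>
     (\<forall>U V W. openin X U \<longrightarrow> a \<in> U \<longrightarrow> openin Y V \<longrightarrow> b \<in> V \<longrightarrow>
        openin Z W \<longrightarrow> f (a, b) \<in> W \<longrightarrow>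
        (\<exists>G. openin X G \<and> G \<noteq> {} \<and> G \<subseteq> U \<and>
             (\<forall>x\<in>G. f ` ({x} \<times> V) \<inter> W \<noteq> {})))"

end

theory Submission
  imports Defs
begin

theorem mainTheorem5:
  fixes X :: "'a topology" and Y :: "'b topology" and Z :: "'c topology"
    and f :: "'a \<times> 'b \<Rightarrow> 'c"
  assumes "f \<in> topspace X \<times> topspace Y \<rightarrow> topspace Z"
  shows "closedin (tau_f X Y Z f)
           {p \<in> topspace X \<times> topspace Y. lower_X_quasicontinuous_at X Y Z f (fst p) (snd p)}"
proof -
  define S where "S = ({{p \<in> topspace X \<times> topspace Y. fst p \<in> U} | U. openin X U}
      \<union> {{p \<in> topspace X \<times> topspace Y. snd p \<in> V} | V. openin Y V}
      \<union> {{p \<in> topspace X \<times> topspace Y. f p \<in> W} | W. openin Z W})"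
  have T: "tau_f X Y Z f = topology_generated_by S" by (simp add: tau_f_def S_def)
  have top: "topspace (tau_f X Y Z f) = topspace X \<times> topspace Y"
  proof -
    have "{p \<in> topspace X \<times> topspace Y. fst p \<in> topspace X} \<in> S"
      unfolding S_def by blast
    moreover have "{p \<in> topspace X \<times> topspace Y. fst p \<in> topspace X} = topspace X \<times> topspace Y"
      by auto
    moreover have "\<Union>S \<subseteq> topspace X \<times> topspace Y" unfolding S_def by auto
    ultimately show ?thesis unfolding T topology_generated_by_topspace
      by (metis Union_upper subset_antisym)
  qed
  let ?Q = "{p \<in> topspace X \<times> topspace Y. lower_X_quasicontinuous_at X Y Z f (fst p) (snd p)}"
  have "openin (tau_f X Y Z f) (topspace X \<times> topspace Y - ?Q)"
  proof (subst openin_subopen, intro ballI)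
    fix p assume p: "p \<in> topspace X \<times> topspace Y - ?Q"
    obtain a b where ab: "p = (a,b)" by (cases p)
    from p ab have nq: "\<not> lower_X_quasicontinuous_at X Y Z f a b" by auto
    from nq have "\<exists>U V W. openin X U \<and> a \<in> U \<and> openin Y V \<and> b \<in> V \<and>
        openin Z W \<and> f (a, b) \<in> W \<and>
        \<not> (\<exists>G. openin X G \<and> G \<noteq> {} \<and> G \<subseteq> U \<and>
             (\<forall>x\<in>G. f ` ({x} \<times> V) \<inter> W \<noteq> {}))"
      by (simp only: lower_X_quasicontinuous_at_def not_all not_imp)
    then obtain U V W where UVW: "openin X U" "a \<in> U" "openin Y V" "b \<in> V"
      "openin Z W" "f (a,b) \<in> W"
      and bad0: "\<not> (\<exists>G. openin X G \<and> G \<noteq> {} \<and> G \<subseteq> U \<and>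
             (\<forall>x\<in>G. f ` ({x} \<times> V) \<inter> W \<noteq> {}))"
      by (elim exE conjE)
    have bad: "\<And>G. openin X G \<Longrightarrow> G \<noteq> {} \<Longrightarrow> G \<subseteq> U \<Longrightarrow> \<exists>x\<in>G. f ` ({x} \<times> V) \<inter> W = {}"
      using bad0 by blast
    define N where "N = {p \<in> topspace X \<times> topspace Y. fst p \<in> U} \<inter>
       {p \<in> topspace X \<times> topspace Y. snd p \<in> V} \<inter> {p \<in> topspace X \<times> topspace Y. f p \<in> W}"
    have "openin (tau_f X Y Z f) N"
      unfolding T openin_topology_generated_by_iff N_def
      apply (intro generate_topology_on.Int generate_topology_on.Basis)
      unfolding S_def
        apply (rule UnI1, rule UnI1, rule CollectI, rule exI[of _ U], simp add: UVW)
       apply (rule UnI1, rule UnI2, rule CollectI, rule exI[of _ V], simp add: UVW)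
      apply (rule UnI2, rule CollectI, rule exI[of _ W], simp add: UVW)
      done
    moreover have "p \<in> N" using p ab UVW unfolding N_def by auto
    moreover have "N \<subseteq> topspace X \<times> topspace Y - ?Q"
    proof
      fix q assume q: "q \<in> N"
      have "\<not> lower_X_quasicontinuous_at X Y Z f (fst q) (snd q)"
      proof (rule notI)
        assume L: "lower_X_quasicontinuous_at X Y Z f (fst q) (snd q)"
        have "fst q \<in> U" "snd q \<in> V" "f (fst q, snd q) \<in> W" using q unfolding N_def by auto
        then have "\<exists>G. openin X G \<and> G \<noteq> {} \<and> G \<subseteq> U \<and>
             (\<forall>x\<in>G. f ` ({x} \<times> V) \<inter> W \<noteq> {})"
          using L[unfolded lower_X_quasicontinuous_at_def, rule_format, OF UVW(1) _ UVW(3) _ UVW(5)]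
          by simp
        then obtain G where G: "openin X G" "G \<noteq> {}" "G \<subseteq> U"
          "\<forall>x\<in>G. f ` ({x} \<times> V) \<inter> W \<noteq> {}"
          by (elim exE conjE)
        then show False using bad[OF G(1-3)] by blast
      qed
      then show "q \<in> topspace X \<times> topspace Y - ?Q" using q unfolding N_def by auto
    qed
    ultimately show "\<exists>T. openin (tau_f X Y Z f) T \<and> p \<in> T \<and> T \<subseteq> topspace X \<times> topspace Y - ?Q"
      by blast
  qed
  then show ?thesis unfolding closedin_def top by auto
qed

end
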